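(* Let $L$ be an $r\times m$ matrix of integers of full rank $r$, and let $x_1,\ldots,x_M\in[0,1)^m$ be points such that the real linear map $L$ restricts to a bijection $\{x_i:i\in\{1,\ldots,M\}\}\to L([0,1)^m)\cap\mathbb{Z}^r$. For a Borel set $A\subset\ker_{\mathbb{T}}L$ and $i\in\{1,\ldots,M\}$, let $A^{(i)}=A\cap(x_i+\ker_{\mathbb{R}}L)$ (with $A$ viewed as a subset of $[0,1)^m$ and addition in $\mathbb{R}^m$). Then there is a constant $c_L>0$ such that for every Borel set $A\subset\ker_{\mathbb{T}}L$, \[\mu_{L,\mathbb{T}}(A)=c_L\sum_{i=1}^{M}\mu_{L,\mathbb{R}}\big(A^{(i)}-x_i\big),\] where $A^{(i)}-x_i$ is computed in $\mathbb{R}^m$.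
   Context: $\mathbb{T}^m$ is identified with $[0,1)^m\subset\mathbb{R}^m$ with coordinatewise addition mod 1, so $\ker_{\mathbb{T}}L=\{x\in[0,1)^m:Lx\in\mathbb{Z}^r\}$; $\mu_{L,\mathbb{T}}$ is the normalized Haar probability measure on this closed subgroup of $\mathbb{T}^m$. $\ker_{\mathbb{R}}L=\{x\in\mathbb{R}^m:Lx=0\}$, an $(m-r)$-dimensional subspace, and $\mu_{L,\mathbb{R}}$ denotes the $(m-r)$-dimensional Lebesgue measure on it. *)

theory Defs
  imports "HOL-Analysis.Analysis" "HOL-Probability.Probability"
begin

text \<open>The unit cube [0,1)^m, identified with the torus T^m.\<close>
definition unit_cube :: "(real^'m) set" where
  "unit_cube = {x. \<forall>j. 0 \<le> x$j \<and> x$j < 1}"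

definition int_vecs :: "(real^'r) set" where
  "int_vecs = {y. \<forall>i. y$i \<in> \<int>}"

definition torus_add :: "real^'m \<Rightarrow> real^'m \<Rightarrow> real^'m" where
  "torus_add g x = (\<chi> j. frac (g$j + x$j))"

definition kerT :: "real^'m^'r \<Rightarrow> (real^'m) set" where
  "kerT L = {x \<in> unit_cube. L *v x \<in> int_vecs}"

definition kerR :: "real^'m^'r \<Rightarrow> (real^'m) set" where
  "kerR L = {x. L *v x = 0}"

text \<open>mu_{L,T}: normalized Haar probability measure on the closed subgroup ker_T L of T^m,
  i.e. a Borel probability measure on ker_T L invariant under the group translations.\<close>
definition haar_kerT :: "real^'m^'r \<Rightarrow> (real^'m) measure \<Rightarrow> bool" where
  "haar_kerT L \<mu> \<longleftrightarrow>
     sets \<mu> = sets (restrict_space borel (kerT L)) \<and>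
     space \<mu> = kerT L \<and>
     prob_space \<mu> \<and>
     (\<forall>g\<in>kerT L. \<forall>B\<in>sets \<mu>. emeasure \<mu> (torus_add g ` B) = emeasure \<mu> B)"

definition onb_list :: "(real^'m) set \<Rightarrow> (real^'m) list" where
  "onb_list V = (SOME bs. length bs = dim V \<and> set bs \<subseteq> V \<and> span (set bs) = V \<and>
      (\<forall>i<length bs. \<forall>j<length bs. bs!i \<bullet> bs!j = (if i = j then 1 else 0)))"

text \<open>(dim V)-dimensional Lebesgue measure on a linear subspace V of R^m: the image of
  Lebesgue measure on R^(dim V) under the isometry given by an orthonormal basis of V.\<close>
definition subspace_lebesgue :: "(real^'m) set \<Rightarrow> (real^'m) measure" where
  "subspace_lebesgue V =
     distr (Pi\<^sub>M {..<dim V} (\<lambda>_. lborel)) borel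
       (\<lambda>t. \<Sum>i<dim V. t i *\<^sub>R (onb_list V ! i))"

end

theory Submission
  imports Defs
begin


lemma onb_list_props:
  fixes V :: "(real^'m) set"
  assumes "subspace V"
  shows "length (onb_list V) = dim V \<and> set (onb_list V) \<subseteq> V \<and> span (set (onb_list V)) = V \<and>
      (\<forall>i<length (onb_list V). \<forall>j<length (onb_list V). onb_list V!i \<bullet> onb_list V!j = (if i = j then 1 else 0))"
proof -
  obtain B where B: "B \<subseteq> V" "pairwise orthogonal B" "\<And>x. x \<in> B \<Longrightarrow> norm x = 1"
              "independent B" "card B = dim V" "span B = V"
    using orthonormal_basis_subspace[OF assms] by metis
  have "finite B" using B(4) independent_imp_finite by blast
  then obtain bs where bs: "set bs = B" "distinct bs" using finite_distinct_list by blast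
  have "length bs = dim V" using B(5) bs distinct_card by metis
  moreover have "\<forall>i<length bs. \<forall>j<length bs. bs!i \<bullet> bs!j = (if i = j then 1 else 0)"
  proof (intro allI impI)
    fix i j assume ij: "i < length bs" "j < length bs"
    show "bs!i \<bullet> bs!j = (if i = j then 1 else 0)"
    proof (cases "i = j")
      case True
      have "bs!i \<in> B" using bs(1) ij(1) nth_mem by blast
      then have "norm (bs!i) = 1" using B(3) by blast
      then show ?thesis using True by (simp add: norm_eq_1)
    next
      case False
      have m: "bs!i \<in> B" "bs!j \<in> B" using bs(1) ij nth_mem by blast+
      have "bs!i \<noteq> bs!j" using bs(2) ij False nth_eq_iff_index_eq by metis
      then have "orthogonal (bs!i) (bs!j)" using B(2) m unfolding pairwise_def by blast
      then show ?thesis using False by (simp add: orthogonal_def)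
    qed
  qed
  ultimately have ex: "\<exists>bs. length bs = dim V \<and> set bs \<subseteq> V \<and> span (set bs) = V \<and>
      (\<forall>i<length bs. \<forall>j<length bs. bs!i \<bullet> bs!j = (if i = j then 1 else 0))"
    using B bs by blast
  show ?thesis unfolding onb_list_def by (rule someI_ex[OF ex])
qed

lemma Basis_vec_axis: "(i::real^'n) \<in> Basis \<Longrightarrow> \<exists>j. i = axis j 1"
  unfolding Basis_vec_def by auto
lemma inner_chi_axis: "(\<chi> j. f j) \<bullet> axis k (1::real) = (f k :: real)"
  by (simp add: inner_axis)
lemma measurable_vec_lambda:
  assumes "\<And>j. (\<lambda>x. f x j) \<in> borel_measurable M"
  shows "(\<lambda>x. (\<chi> j. f x j) :: real^'n) \<in> borel_measurable M"
proof (rule borel_measurable_euclidean_space[THEN iffD2], intro ballI)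
  fix i :: "real^'n" assume "i \<in> Basis"
  then obtain k where k: "i = axis k 1" using Basis_vec_axis by blast
  show "(\<lambda>x. (\<chi> j. f x j) \<bullet> i) \<in> borel_measurable M"
    unfolding k inner_chi_axis by (rule assms)
qed

lemma unit_cube_borel[measurable]: "unit_cube \<in> sets (borel :: (real^'m) measure)"
proof -
  have eq: "unit_cube = (\<Inter>j. {x::real^'m. 0 \<le> x$j} \<inter> {x. x$j < 1})" by (auto simp: unit_cube_def)
  have "closed {x::real^'m. 0 \<le> x$j}" for j by (intro closed_Collect_le continuous_intros)
  moreover have "open {x::real^'m. x$j < 1}" for j by (intro open_Collect_less continuous_intros)
  ultimately have "{x::real^'m. 0 \<le> x$j} \<inter> {x. x$j < 1} \<in> sets borel" for j
    by (intro sets.Int borel_closed borel_open)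
  then show ?thesis unfolding eq by (intro sets.finite_INT) auto
qed

lemma countable_int_vecs: "countable (int_vecs :: (real^'r) set)"
proof -
  have "int_vecs = (\<lambda>f. \<chi> i. f i) ` (PiE UNIV (\<lambda>_::'r. \<int>))"
  proof safe
    fix y :: "real^'r" assume "y \<in> int_vecs"
    then have "(\<lambda>i. y$i) \<in> PiE UNIV (\<lambda>_. \<int>)" by (auto simp: int_vecs_def)
    then show "y \<in> (\<lambda>f. \<chi> i. f i) ` (PiE UNIV (\<lambda>_::'r. \<int>))"
      by (metis image_eqI vec_nth_inverse)
  qed (auto simp: int_vecs_def PiE_iff)
  moreover have "countable (PiE (UNIV::'r set) (\<lambda>_. \<int>::real set))"
    by (intro countable_PiE) (auto simp: Ints_def)
  ultimately show ?thesis by (metis countable_image)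
qed

lemma int_vecs_add: "a \<in> int_vecs \<Longrightarrow> b \<in> int_vecs \<Longrightarrow> a + b \<in> int_vecs"
  and int_vecs_diff: "a \<in> int_vecs \<Longrightarrow> b \<in> int_vecs \<Longrightarrow> a - b \<in> int_vecs"
  and int_vecs_uminus: "a \<in> int_vecs \<Longrightarrow> - a \<in> int_vecs"
  by (auto simp: int_vecs_def)

lemma int_vecs_mult:
  fixes L :: "real^'m^'r"
  assumes "\<forall>i j. L$i$j \<in> \<int>" "n \<in> int_vecs"
  shows "L *v n \<in> int_vecs"
  using assms unfolding int_vecs_def matrix_vector_mult_def by (simp add: Ints_sum Ints_mult)

definition flv :: "real^'m \<Rightarrow> real^'m" where
  "flv w = (\<chi> j. of_int \<lfloor>w$j\<rfloor>)"

lemma flv_int: "flv w \<in> int_vecs"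
  by (auto simp: flv_def int_vecs_def)

lemma cube_iff_flv:
  assumes "n \<in> int_vecs"
  shows "w - n \<in> unit_cube \<longleftrightarrow> n = flv w"
proof
  assume h: "w - n \<in> unit_cube"
  show "n = flv w"
  proof (rule vec_eq_iff[THEN iffD2], rule allI)
    fix j
    from assms obtain z where z: "n$j = of_int z" by (auto simp: int_vecs_def elim!: Ints_cases)
    from h have "0 \<le> w$j - n$j" "w$j - n$j < 1" by (auto simp: unit_cube_def)
    then have "\<lfloor>w$j\<rfloor> = z" using z by linarith
    then show "n$j = flv w $ j" using z by (simp add: flv_def)
  qed
next
  assume "n = flv w"
  have "(w - flv w)$j = frac (w$j)" for j by (simp add: flv_def frac_def)
  then have "w - flv w \<in> unit_cube" unfolding unit_cube_def by (auto simp: frac_ge_0 frac_lt_1)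
  then show "w - n \<in> unit_cube" using \<open>n = flv w\<close> by simp
qed

lemma count_cube_sum:
  "(\<integral>\<^sup>+n. indicator unit_cube (w + n) \<partial>count_space int_vecs) = (1::ennreal)"
proof -
  have "(\<integral>\<^sup>+n. indicator unit_cube (w + n) \<partial>count_space int_vecs) =
     (\<Sum>n\<in>{- flv w}. indicator unit_cube (w + n) :: ennreal)"
  proof (rule nn_integral_count_space')
    fix n assume "n \<in> int_vecs" "n \<notin> {- flv w}"
    then have "-n \<noteq> flv w" by (metis minus_minus singletonI)
    moreover have "-n \<in> int_vecs" using \<open>n \<in> int_vecs\<close> by (rule int_vecs_uminus)
    ultimately have "w - (-n) \<notin> unit_cube" using cube_iff_flv[of "-n" w] by blast
    then show "indicator unit_cube (w + n) = (0::ennreal)" by simp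
  qed (auto simp: flv_int int_vecs_uminus)
  also have "\<dots> = 1"
  proof -
    have "w - flv w \<in> unit_cube" using cube_iff_flv[of "flv w" w] flv_int by blast
    then show ?thesis by simp
  qed
  finally show ?thesis .
qed

lemma count_A_sum:
  assumes "A \<subseteq> unit_cube"
  shows "(\<integral>\<^sup>+n. indicator A (w - n) \<partial>count_space int_vecs) = (indicator A (w - flv w)::ennreal)"
proof -
  have "(\<integral>\<^sup>+n. indicator A (w - n) \<partial>count_space int_vecs) =
     (\<Sum>n\<in>{flv w}. indicator A (w - n) :: ennreal)"
  proof (rule nn_integral_count_space')
    fix n assume "n \<in> int_vecs" "n \<notin> {flv w}"
    then have "w - n \<notin> unit_cube" using cube_iff_flv[of n w] by blast
    then have "w - n \<notin> A" using assms by blast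
    then show "indicator A (w - n) = (0::ennreal)" by simp
  qed (auto simp: flv_int)
  then show ?thesis by simp
qed

lemma torus_add_flv: "torus_add x y = (x + y) - flv (x + y)"
  unfolding vec_eq_iff torus_add_def flv_def by (simp add: frac_def)



definition "Kb L = onb_list (kerR L)"
definition "dd L = dim (kerR L)"
definition "PP L = PiM {..<dd L} (\<lambda>_. lborel :: real measure)"
definition "TT L t = (\<Sum>i<dd L. t i *\<^sub>R (Kb L ! i))"
definition "sec L k = (SOME y. L *v y = k)"

lemma kerR_subspace: "subspace (kerR (L::real^'m^'r))"
  unfolding subspace_def kerR_def
  by (simp add: matrix_vector_right_distrib matrix_vector_mult_scaleR)

lemma Kb_props:
  fixes L :: "real^'m^'r"
  shows "length (Kb L) = dd L" "set (Kb L) \<subseteq> kerR L" "span (set (Kb L)) = kerR L"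
    "\<And>i j. i < dd L \<Longrightarrow> j < dd L \<Longrightarrow> Kb L ! i \<bullet> Kb L ! j = (if i = j then 1 else 0)"
  using onb_list_props[OF kerR_subspace[of L]] unfolding Kb_def dd_def by auto

lemma Kb_in: "i < dd L \<Longrightarrow> Kb L ! i \<in> kerR L"
  using Kb_props(1,2)[of L] nth_mem by (metis subsetD)

lemma TT_in: "TT L t \<in> kerR L"
proof -
  have "TT L t \<in> span (set (Kb L))" unfolding TT_def
    by (intro span_sum span_scale span_base) (metis Kb_props(1) lessThan_iff nth_mem)
  then show ?thesis using Kb_props(3)[of L] by metis
qed

lemma L_TT: "L *v TT L t = 0"
  using TT_in[of L t] by (simp add: kerR_def)

lemma TT_inner: "j < dd L \<Longrightarrow> TT L t \<bullet> (Kb L ! j) = t j"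
proof -
  assume j: "j < dd L"
  have "TT L t \<bullet> (Kb L ! j) = (\<Sum>i<dd L. t i * (Kb L ! i \<bullet> Kb L ! j))"
    unfolding TT_def by (simp add: inner_sum_left)
  also have "\<dots> = (\<Sum>i<dd L. if i = j then t i else 0)"
    by (intro sum.cong refl) (simp add: Kb_props(4) j)
  also have "\<dots> = t j" using j by simp
  finally show ?thesis .
qed

lemma TT_coord:
  assumes "u \<in> kerR L"
  shows "TT L (\<lambda>i. u \<bullet> Kb L ! i) = u"
proof -
  define v where "v = u - TT L (\<lambda>i. u \<bullet> Kb L ! i)"
  have "v \<in> kerR L" unfolding v_def by (rule subspace_diff[OF kerR_subspace assms TT_in])
  then have vs: "v \<in> span (set (Kb L))" using Kb_props(3)[of L] by metis
  have "orthogonal v y" if y: "y \<in> set (Kb L)" for y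
  proof -
    obtain j where j: "j < dd L" "Kb L ! j = y"
      using y unfolding in_set_conv_nth Kb_props(1) by blast
    have "v \<bullet> y = u \<bullet> y - TT L (\<lambda>i. u \<bullet> Kb L ! i) \<bullet> Kb L ! j"
      unfolding v_def inner_diff_left j(2) ..
    also have "\<dots> = u \<bullet> y - u \<bullet> Kb L ! j" by (simp only: TT_inner[OF j(1)])
    also have "\<dots> = 0" using j(2) by simp
    finally show ?thesis unfolding orthogonal_def .
  qed
  then have "orthogonal v v" using orthogonal_to_span[OF vs] by blast
  then have "v = 0" by (simp add: orthogonal_def)
  then show ?thesis by (simp add: v_def)
qed

lemma TT_add: "TT L (\<lambda>i. t i + c i) = TT L t + TT L c"
  unfolding TT_def by (simp add: scaleR_add_left sum.distrib)

lemma TT_restrict: "TT L (restrict t {..<dd L}) = TT L t"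
  unfolding TT_def by (intro sum.cong refl) simp

lemma TT_measurable[measurable]: "TT L \<in> borel_measurable (PP L)"
  unfolding TT_def PP_def
  by (intro borel_measurable_sum borel_measurable_scaleR borel_measurable_const)
     (auto intro: measurable_component_singleton)

lemma sec_prop:
  fixes L :: "real^'m^'r"
  assumes "rank L = CARD('r)"
  shows "L *v sec L k = k"
proof -
  have sub: "subspace (range (\<lambda>x. L *v x))"
    by (intro linear_subspace_image subspace_UNIV) simp
  have "dim (range (\<lambda>x. L *v x)) = DIM(real^'r)" using assms rank_dim_range[of L] by simp
  then have "span (range (\<lambda>x. L *v x)) = UNIV" using dim_eq_full by blast
  then have "range (\<lambda>x. L *v x) = UNIV" using span_eq_iff sub by blast
  then have "\<exists>y. L *v y = k" by (metis UNIV_I image_iff)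
  then show ?thesis unfolding sec_def by (rule someI_ex)
qed

interpretation lb: product_sigma_finite "\<lambda>_::nat. lborel :: real measure"
  by unfold_locales

lemma PP_shift:
  "distr (PP L) (PP L) (\<lambda>t. restrict (\<lambda>i. t i + c i) {..<dd L}) = PP L"
proof -
  have meas: "(\<lambda>t. restrict (\<lambda>i. t i + c i) {..<dd L}) \<in> PP L \<rightarrow>\<^sub>M PP L"
    unfolding PP_def by (intro measurable_restrict) (auto intro: measurable_component_singleton)
  show ?thesis
    unfolding PP_def
  proof (rule lb.PiM_eqI)
    fix A assume A: "\<And>i. i \<in> {..<dd L} \<Longrightarrow> A i \<in> sets (lborel :: real measure)"
    have pre: "(\<lambda>t. restrict (\<lambda>i. t i + c i) {..<dd L}) -` Pi\<^sub>E {..<dd L} A \<inter> space (PiM {..<dd L} (\<lambda>_. lborel))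
       = Pi\<^sub>E {..<dd L} (\<lambda>i. (\<lambda>x. x + c i) -` A i)"
      by (auto simp: space_PiM PiE_iff extensional_def)
    have e: "emeasure lborel ((\<lambda>x. x + c i) -` A i) = emeasure lborel (A i)" if "i \<in> {..<dd L}" for i
    proof -
      have "emeasure lborel ((\<lambda>x. x + c i) -` A i) = emeasure (distr lborel borel ((+) (c i))) (A i)"
      proof -
        have "(\<lambda>x. x + c i) = (+) (c i)" by (auto simp: add.commute)
        then show ?thesis using A[OF that] by (subst emeasure_distr) auto
      qed
      then show ?thesis by (simp add: lborel_distr_plus)
    qed
    have ms: "(\<lambda>x. x + c i) -` A i \<in> sets lborel" if "i \<in> {..<dd L}" for i
      unfolding sets_lborel by (rule measurable_sets_borel[OF _ A[OF that]]) simp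
    show "emeasure (distr (PiM {..<dd L} (\<lambda>_. lborel)) (PiM {..<dd L} (\<lambda>_. lborel))
          (\<lambda>t. restrict (\<lambda>i. t i + c i) {..<dd L})) (Pi\<^sub>E {..<dd L} A) = (\<Prod>i\<in>{..<dd L}. emeasure lborel (A i))"
    proof -
      have PA: "Pi\<^sub>E {..<dd L} A \<in> sets (PiM {..<dd L} (\<lambda>_. lborel :: real measure))"
        using A by (intro sets_PiM_I_finite) auto
      have "emeasure (distr (PiM {..<dd L} (\<lambda>_. lborel)) (PiM {..<dd L} (\<lambda>_. lborel))
          (\<lambda>t. restrict (\<lambda>i. t i + c i) {..<dd L})) (Pi\<^sub>E {..<dd L} A) =
          emeasure (PiM {..<dd L} (\<lambda>_. lborel)) (Pi\<^sub>E {..<dd L} (\<lambda>i. (\<lambda>x. x + c i) -` A i))"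
        using meas PA unfolding PP_def by (subst emeasure_distr) (simp_all add: pre)
      also have "\<dots> = (\<Prod>i\<in>{..<dd L}. emeasure lborel ((\<lambda>x. x + c i) -` A i))"
        using ms by (subst lb.emeasure_PiM) auto
      also have "\<dots> = (\<Prod>i\<in>{..<dd L}. emeasure lborel (A i))"
        using e by (intro prod.cong) auto
      finally show ?thesis .
    qed
  qed simp_all
qed

lemma PP_invariant:
  assumes f[measurable]: "f \<in> borel_measurable borel" and u: "u \<in> kerR L"
  shows "(\<integral>\<^sup>+t. f (TT L t + u) \<partial>PP L) = (\<integral>\<^sup>+t. f (TT L t) \<partial>PP L)"
proof -
  define c where "c i = u \<bullet> Kb L ! i" for i
  define sh where "sh t = restrict (\<lambda>i. t i + c i) {..<dd L}" for t
  have meas: "sh \<in> PP L \<rightarrow>\<^sub>M PP L"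
    unfolding PP_def sh_def by (intro measurable_restrict) (auto intro: measurable_component_singleton)
  have "TT L t + u = TT L (sh t)" for t
    unfolding sh_def TT_restrict TT_add c_def TT_coord[OF u] ..
  then have "(\<integral>\<^sup>+t. f (TT L t + u) \<partial>PP L) = (\<integral>\<^sup>+t. f (TT L (sh t)) \<partial>PP L)" by simp
  also have "\<dots> = (\<integral>\<^sup>+t. f (TT L t) \<partial>distr (PP L) (PP L) sh)"
    by (rule nn_integral_distr[symmetric]) (use meas in auto)
  also have "distr (PP L) (PP L) sh = PP L" unfolding sh_def by (rule PP_shift)
  finally show ?thesis .
qed



lemma flv_measurable: "flv \<in> borel_measurable (borel :: (real^'m) measure)"
  unfolding flv_def
  by (rule measurable_vec_lambda, rule measurable_compose[OF borel_measurable_nth borel_measurable_real_floor])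

lemma flv_measurable'[measurable (raw)]:
  "f \<in> borel_measurable M \<Longrightarrow> (\<lambda>x. flv (f x :: real^'m)) \<in> borel_measurable M"
  using measurable_compose[OF _ flv_measurable] by blast

definition "HH L A k = (\<integral>\<^sup>+t. indicator A (sec L k + TT L t) \<partial>PP L)"
definition "NN L A = (\<integral>\<^sup>+k. HH L A k \<partial>count_space int_vecs)"

lemma bij_shift_int_vecs:
  assumes "c \<in> int_vecs"
  shows "bij_betw (\<lambda>k. k + c) int_vecs int_vecs"
proof (rule bij_betwI[where g="\<lambda>k. k - c"])
  show "(\<lambda>k. k + c) \<in> int_vecs \<rightarrow> int_vecs" using assms int_vecs_add by blast
  show "(\<lambda>k. k - c) \<in> int_vecs \<rightarrow> int_vecs" using assms int_vecs_diff by blast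
qed auto

lemma step_translate:
  fixes L :: "real^'m^'r"
  assumes L_int: "\<forall>i j. L$i$j \<in> \<int>" and L_rank: "rank L = CARD('r)"
    and A[measurable]: "A \<in> sets borel"
    and x: "L *v x \<in> int_vecs" and n: "n \<in> int_vecs" and k: "k \<in> int_vecs"
  shows "(\<integral>\<^sup>+t. indicator unit_cube (sec L k + TT L t) * indicator A (x + (sec L k + TT L t) - n) \<partial>PP L)
    = (\<lambda>k'. \<integral>\<^sup>+t. indicator unit_cube (sec L k' + TT L t - x + n) * indicator A (sec L k' + TT L t) \<partial>PP L)
        (k + (L *v x - L *v n))"
proof -
  define k' where "k' = k + (L *v x - L *v n)"
  define u where "u = x + sec L k - n - sec L k'"
  have u: "u \<in> kerR L"
    unfolding kerR_def u_def k'_def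
    by (simp add: matrix_vector_right_distrib matrix_vector_mult_diff_distrib sec_prop[OF L_rank])
  define f where "f w = indicator unit_cube (w + sec L k' - x + n) * (indicator A (sec L k' + w) :: ennreal)" for w :: "real^'m"
  have fm: "f \<in> borel_measurable borel" unfolding f_def by measurable
  have e1: "f (TT L t + u) = indicator unit_cube (sec L k + TT L t) * indicator A (x + (sec L k + TT L t) - n)" for t
  proof -
    have h1: "TT L t + u + sec L k' - x + n = sec L k + TT L t" unfolding u_def by (simp add: algebra_simps)
    have h2: "sec L k' + (TT L t + u) = x + (sec L k + TT L t) - n" unfolding u_def by (simp add: algebra_simps)
    show ?thesis unfolding f_def by (simp only: h1 h2)
  qed
  have e2: "f (TT L t) = indicator unit_cube (sec L k' + TT L t - x + n) * indicator A (sec L k' + TT L t)" for t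
    unfolding f_def by (simp add: algebra_simps)
  show ?thesis
    using PP_invariant[OF fm u] unfolding e1 e2 k'_def[symmetric] by simp
qed

lemma N_invariant:
  fixes L :: "real^'m^'r"
  assumes L_int: "\<forall>i j. L$i$j \<in> \<int>" and L_rank: "rank L = CARD('r)"
    and A[measurable]: "A \<in> sets borel" and Asub: "A \<subseteq> unit_cube"
    and x: "L *v x \<in> int_vecs"
  shows "(\<integral>\<^sup>+k. \<integral>\<^sup>+t. indicator unit_cube (sec L k + TT L t) * indicator A (torus_add x (sec L k + TT L t)) \<partial>PP L \<partial>count_space int_vecs) = NN L A"
proof -
  let ?Z = "int_vecs :: (real^'r) set"
  let ?Zm = "int_vecs :: (real^'m) set"
  define G where "G k n t = indicator unit_cube (sec L k + TT L t) * (indicator A (x + (sec L k + TT L t) - n) :: ennreal)" for k n t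
  define \<Phi> where "\<Phi> n k' = (\<integral>\<^sup>+t. indicator unit_cube (sec L k' + TT L t - x + n) * (indicator A (sec L k' + TT L t) :: ennreal) \<partial>PP L)" for n k'
  have Gm: "(\<lambda>t. G k n t) \<in> borel_measurable (PP L)" for k n unfolding G_def by measurable
  have s1: "indicator unit_cube (sec L k + TT L t) * indicator A (torus_add x (sec L k + TT L t))
      = (\<integral>\<^sup>+n. G k n t \<partial>count_space ?Zm)" for k t
  proof -
    have "(\<integral>\<^sup>+n. G k n t \<partial>count_space ?Zm) = indicator unit_cube (sec L k + TT L t) *
         (\<integral>\<^sup>+n. indicator A ((x + (sec L k + TT L t)) - n) \<partial>count_space ?Zm)"
      unfolding G_def by (rule nn_integral_cmult) simp
    also have "\<dots> = indicator unit_cube (sec L k + TT L t) * indicator A (torus_add x (sec L k + TT L t))"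
      unfolding count_A_sum[OF Asub] torus_add_flv ..
    finally show ?thesis by simp
  qed
  have "(\<integral>\<^sup>+k. \<integral>\<^sup>+t. indicator unit_cube (sec L k + TT L t) * indicator A (torus_add x (sec L k + TT L t)) \<partial>PP L \<partial>count_space ?Z)
      = (\<integral>\<^sup>+k. \<integral>\<^sup>+t. \<integral>\<^sup>+n. G k n t \<partial>count_space ?Zm \<partial>PP L \<partial>count_space ?Z)"
    unfolding s1 ..
  also have "\<dots> = (\<integral>\<^sup>+k. \<integral>\<^sup>+n. \<integral>\<^sup>+t. G k n t \<partial>PP L \<partial>count_space ?Zm \<partial>count_space ?Z)"
    by (intro nn_integral_cong nn_integral_count_space_nn_integral countable_int_vecs Gm)
  also have "\<dots> = (\<integral>\<^sup>+n. \<integral>\<^sup>+k. \<integral>\<^sup>+t. G k n t \<partial>PP L \<partial>count_space ?Z \<partial>count_space ?Zm)"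
    by (intro nn_integral_count_space_nn_integral countable_int_vecs) simp
  also have "\<dots> = (\<integral>\<^sup>+n. \<integral>\<^sup>+k. \<Phi> n (k + (L *v x - L *v n)) \<partial>count_space ?Z \<partial>count_space ?Zm)"
  proof (intro nn_integral_cong)
    fix n k assume "n \<in> space (count_space ?Zm)" "k \<in> space (count_space ?Z)"
    then have "n \<in> ?Zm" "k \<in> ?Z" by simp_all
    then show "(\<integral>\<^sup>+t. G k n t \<partial>PP L) = \<Phi> n (k + (L *v x - L *v n))"
      unfolding G_def \<Phi>_def by (rule step_translate[OF L_int L_rank A x])
  qed
  also have "\<dots> = (\<integral>\<^sup>+n. \<integral>\<^sup>+k. \<Phi> n k \<partial>count_space ?Z \<partial>count_space ?Zm)"
  proof (rule nn_integral_cong)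
    fix n assume "n \<in> space (count_space ?Zm)"
    then have "n \<in> ?Zm" by simp
    then have "L *v x - L *v n \<in> ?Z" using x int_vecs_diff int_vecs_mult[OF L_int] by blast
    then show "(\<integral>\<^sup>+k. \<Phi> n (k + (L *v x - L *v n)) \<partial>count_space ?Z) = (\<integral>\<^sup>+k. \<Phi> n k \<partial>count_space ?Z)"
      by (rule nn_integral_bij_count_space[OF bij_shift_int_vecs])
  qed
  also have "\<dots> = (\<integral>\<^sup>+k. \<integral>\<^sup>+n. \<Phi> n k \<partial>count_space ?Zm \<partial>count_space ?Z)"
    by (intro nn_integral_count_space_nn_integral[symmetric] countable_int_vecs) simp
  also have "\<dots> = (\<integral>\<^sup>+k. \<integral>\<^sup>+t. \<integral>\<^sup>+n. indicator unit_cube (sec L k + TT L t - x + n) * (indicator A (sec L k + TT L t) :: ennreal) \<partial>count_space ?Zm \<partial>PP L \<partial>count_space ?Z)"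
    unfolding \<Phi>_def
    by (intro nn_integral_cong nn_integral_count_space_nn_integral[symmetric] countable_int_vecs) measurable
  also have "\<dots> = (\<integral>\<^sup>+k. \<integral>\<^sup>+t. indicator A (sec L k + TT L t) \<partial>PP L \<partial>count_space ?Z)"
  proof (intro nn_integral_cong)
    fix k t
    have "(\<integral>\<^sup>+n. indicator unit_cube (sec L k + TT L t - x + n) * (indicator A (sec L k + TT L t) :: ennreal) \<partial>count_space ?Zm)
        = (\<integral>\<^sup>+n. indicator unit_cube (sec L k + TT L t - x + n) \<partial>count_space ?Zm) * indicator A (sec L k + TT L t)"
      by (rule nn_integral_multc) simp
    then show "(\<integral>\<^sup>+n. indicator unit_cube (sec L k + TT L t - x + n) * (indicator A (sec L k + TT L t) :: ennreal) \<partial>count_space ?Zm)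
        = indicator A (sec L k + TT L t)"
      unfolding count_cube_sum by simp
  qed
  also have "\<dots> = NN L A" unfolding NN_def HH_def ..
  finally show ?thesis .
qed



lemma torus_add_measurable[measurable (raw)]:
  "f \<in> borel_measurable M \<Longrightarrow> g \<in> borel_measurable M \<Longrightarrow>
    (\<lambda>x. torus_add (f x) (g x :: real^'m)) \<in> borel_measurable M"
proof -
  assume f: "f \<in> borel_measurable M" and g: "g \<in> borel_measurable M"
  have fg: "(\<lambda>x. f x + g x) \<in> borel_measurable M" using f g by (rule borel_measurable_add)
  have "(\<lambda>x. flv (f x + g x)) \<in> borel_measurable M" using fg by (rule flv_measurable')
  then show ?thesis unfolding torus_add_flv using fg by (rule borel_measurable_diff[rotated])
qed

lemma torus_add_comm: "torus_add x y = torus_add y x"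
  unfolding torus_add_def by (simp add: add.commute)

lemma kerT_iff: "x \<in> kerT L \<longleftrightarrow> x \<in> unit_cube \<and> L *v x \<in> int_vecs"
  by (simp add: kerT_def)

lemma haar_pre:
  fixes L :: "real^'m^'r"
  assumes L_int: "\<forall>i j. L$i$j \<in> \<int>" and haar: "haar_kerT L \<mu>"
    and y: "y \<in> kerT L" and A: "A \<in> sets borel" and Asub: "A \<subseteq> kerT L"
  shows "emeasure \<mu> {x \<in> kerT L. torus_add x y \<in> A} = emeasure \<mu> A"
proof -
  define S where "S = {x \<in> kerT L. torus_add x y \<in> A}"
  have sets\<mu>: "sets \<mu> = sets (restrict_space borel (kerT L))" using haar by (simp add: haar_kerT_def)
  have pre: "(\<lambda>x. torus_add x y) -` A \<in> sets borel"
    by (rule measurable_sets_borel[OF _ A]) measurable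
  have "S = kerT L \<inter> (\<lambda>x. torus_add x y) -` A" unfolding S_def by auto
  then have S: "S \<in> sets \<mu>" unfolding sets\<mu> sets_restrict_space using pre by blast
  have AS: "A \<in> sets \<mu>" unfolding sets\<mu> sets_restrict_space using A Asub by blast
  have img: "torus_add y ` S = A"
  proof
    show "torus_add y ` S \<subseteq> A"
    proof
      fix z assume "z \<in> torus_add y ` S"
      then obtain x where "x \<in> S" "z = torus_add y x" by blast
      then show "z \<in> A" unfolding S_def using torus_add_comm[of x y] by simp
    qed
  next
    show "A \<subseteq> torus_add y ` S"
    proof
      fix a assume a: "a \<in> A"
      then have aK: "a \<in> unit_cube" "L *v a \<in> int_vecs" using Asub kerT_iff by blast+
      have yK: "L *v y \<in> int_vecs" using y kerT_iff by blast
      define m where "m = flv (- y + a)"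
      define x where "x = torus_add (- y) a"
      have xeq: "x = (- y + a) - m" unfolding x_def m_def torus_add_flv ..
      have "x \<in> unit_cube" unfolding xeq m_def using cube_iff_flv[OF flv_int] by blast
      moreover have "L *v x \<in> int_vecs"
        unfolding xeq by (simp add: matrix_vector_right_distrib matrix_vector_mult_diff_distrib
            int_vecs_diff int_vecs_add int_vecs_uminus yK aK m_def flv_int int_vecs_mult[OF L_int])
      ultimately have xK: "x \<in> kerT L" using kerT_iff by blast
      have mZ: "- m \<in> int_vecs" unfolding m_def by (intro int_vecs_uminus flv_int)
      have "(a - m) - (- m) \<in> unit_cube" using aK by simp
      then have fl: "- m = flv (a - m)" using cube_iff_flv[OF mZ] by blast
      have "torus_add y x = a"
        unfolding torus_add_flv
      proof -
        have "y + x = a - m" unfolding xeq by simp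
        then show "y + x - flv (y + x) = a" using fl by (metis diff_minus_eq_add diff_add_cancel)
      qed
      then have "torus_add x y \<in> A" using a torus_add_comm by metis
      then have "x \<in> S" unfolding S_def using xK by blast
      then show "a \<in> torus_add y ` S" using \<open>torus_add y x = a\<close> by blast
    qed
  qed
  have "emeasure \<mu> (torus_add y ` S) = emeasure \<mu> S" using haar y S by (simp add: haar_kerT_def)
  then show ?thesis using img S_def by simp
qed



lemma PP_sigma_finite: "sigma_finite_measure (PP L)"
  unfolding PP_def by (rule lb.sigma_finite) simp

lemma L_sec_TT:
  fixes L :: "real^'m^'r"
  assumes "rank L = CARD('r)"
  shows "L *v (sec L k + TT L t) = k"
  by (simp add: matrix_vector_right_distrib sec_prop[OF assms] L_TT)

lemma N_mu:
  fixes L :: "real^'m^'r"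
  assumes L_int: "\<forall>i j. L$i$j \<in> \<int>" and L_rank: "rank L = CARD('r)"
    and haar: "haar_kerT L \<mu>"
    and A[measurable]: "A \<in> sets borel" and Asub: "A \<subseteq> kerT L"
  shows "NN L A = emeasure \<mu> A * NN L unit_cube"
proof -
  let ?Z = "int_vecs :: (real^'r) set"
  have prob: "prob_space \<mu>" and sp: "space \<mu> = kerT L"
    and sets\<mu>: "sets \<mu> = sets (restrict_space borel (kerT L))"
    using haar by (auto simp: haar_kerT_def)
  interpret prob_space \<mu> by (rule prob)
  interpret PS: pair_sigma_finite \<mu> "PP L"
    unfolding pair_sigma_finite_def using prob_space_imp_sigma_finite[OF prob] PP_sigma_finite by blast
  interpret P: sigma_finite_measure "PP L" by (rule PP_sigma_finite)
  have AK: "A \<subseteq> unit_cube" using Asub by (auto simp: kerT_def)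
  define G where "G k x t = indicator unit_cube (sec L k + TT L t) * (indicator A (torus_add x (sec L k + TT L t)) :: ennreal)" for k x t
  have f1: "fst \<in> (restrict_space borel (kerT L) \<Otimes>\<^sub>M PP L) \<rightarrow>\<^sub>M borel"
  proof -
    have i: "(\<lambda>x. x) \<in> restrict_space borel (kerT L) \<rightarrow>\<^sub>M (borel :: (real^'m) measure)"
      by (rule measurable_restrict_space1[OF measurable_ident_sets[OF refl]])
    show ?thesis using measurable_compose[OF measurable_fst i] by blast
  qed
  have f2: "(\<lambda>p. TT L (snd p)) \<in> (restrict_space borel (kerT L) \<Otimes>\<^sub>M PP L) \<rightarrow>\<^sub>M borel"
    by (rule measurable_compose[OF measurable_snd TT_measurable])
  have Gm: "(\<lambda>p. G k (fst p) (snd p)) \<in> borel_measurable (\<mu> \<Otimes>\<^sub>M PP L)" for k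
  proof -
    have "(\<lambda>p. G k (fst p) (snd p)) \<in> borel_measurable (restrict_space borel (kerT L) \<Otimes>\<^sub>M PP L)"
      unfolding G_def using f1 f2 by measurable
    moreover have "(\<mu> \<Otimes>\<^sub>M PP L) \<rightarrow>\<^sub>M (borel :: ennreal measure) = (restrict_space borel (kerT L) \<Otimes>\<^sub>M PP L) \<rightarrow>\<^sub>M borel"
      by (rule measurable_cong_sets) (simp_all add: sets_pair_measure_cong[OF sets\<mu> refl])
    ultimately show ?thesis by simp
  qed
  have Gm': "case_prod (G k) \<in> borel_measurable (\<mu> \<Otimes>\<^sub>M PP L)" for k
    using Gm[of k] by (simp add: case_prod_beta')
  have "NN L A = (\<integral>\<^sup>+x. NN L A \<partial>\<mu>)" by (simp add: emeasure_space_1)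
  also have "\<dots> = (\<integral>\<^sup>+x. \<integral>\<^sup>+k. \<integral>\<^sup>+t. G k x t \<partial>PP L \<partial>count_space ?Z \<partial>\<mu>)"
  proof (rule nn_integral_cong)
    fix x assume "x \<in> space \<mu>"
    then have "L *v x \<in> int_vecs" using sp kerT_iff by blast
    then show "NN L A = (\<integral>\<^sup>+k. \<integral>\<^sup>+t. G k x t \<partial>PP L \<partial>count_space ?Z)"
      unfolding G_def by (rule N_invariant[OF L_int L_rank A AK, symmetric])
  qed
  also have "\<dots> = (\<integral>\<^sup>+k. \<integral>\<^sup>+x. \<integral>\<^sup>+t. G k x t \<partial>PP L \<partial>\<mu> \<partial>count_space ?Z)"
    by (intro nn_integral_count_space_nn_integral countable_int_vecs sigma_finite_measure.borel_measurable_nn_integral[OF PP_sigma_finite] Gm')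
  also have "\<dots> = (\<integral>\<^sup>+k. \<integral>\<^sup>+t. \<integral>\<^sup>+x. G k x t \<partial>\<mu> \<partial>PP L \<partial>count_space ?Z)"
    by (intro nn_integral_cong PS.Fubini'[symmetric] Gm')
  also have "\<dots> = (\<integral>\<^sup>+k. \<integral>\<^sup>+t. indicator unit_cube (sec L k + TT L t) * emeasure \<mu> A \<partial>PP L \<partial>count_space ?Z)"
  proof (intro nn_integral_cong)
    fix k t assume k: "k \<in> space (count_space ?Z)"
    let ?y = "sec L k + TT L t"
    show "(\<integral>\<^sup>+x. G k x t \<partial>\<mu>) = indicator unit_cube ?y * emeasure \<mu> A"
    proof (cases "?y \<in> unit_cube")
      case True
      have "L *v ?y \<in> int_vecs" using k L_sec_TT[OF L_rank] by simp
      then have yK: "?y \<in> kerT L" using True kerT_iff by blast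
      have "(\<integral>\<^sup>+x. G k x t \<partial>\<mu>) = (\<integral>\<^sup>+x. indicator {x \<in> kerT L. torus_add x ?y \<in> A} x \<partial>\<mu>)"
        unfolding G_def using True sp by (intro nn_integral_cong) (auto simp: indicator_def)
      also have "\<dots> = emeasure \<mu> {x \<in> kerT L. torus_add x ?y \<in> A}"
      proof (rule nn_integral_indicator)
        have pre: "(\<lambda>x. torus_add x ?y) -` A \<in> sets borel"
          by (rule measurable_sets_borel[OF _ A]) measurable
        have "{x \<in> kerT L. torus_add x ?y \<in> A} = kerT L \<inter> (\<lambda>x. torus_add x ?y) -` A" by auto
        then show "{x \<in> kerT L. torus_add x ?y \<in> A} \<in> sets \<mu>"
          unfolding sets\<mu> sets_restrict_space using pre by blast
      qed
      also have "\<dots> = emeasure \<mu> A" by (rule haar_pre[OF L_int haar yK A Asub])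
      finally show ?thesis using True by simp
    next
      case False
      then show ?thesis unfolding G_def by simp
    qed
  qed
  also have "\<dots> = (\<integral>\<^sup>+k. HH L unit_cube k * emeasure \<mu> A \<partial>count_space ?Z)"
    unfolding HH_def by (intro nn_integral_cong nn_integral_multc) measurable
  also have "\<dots> = NN L unit_cube * emeasure \<mu> A"
    unfolding NN_def by (rule nn_integral_multc) simp
  finally show ?thesis by (simp add: mult.commute)
qed



lemma Lmult_measurable: "(\<lambda>x. L *v x) \<in> borel_measurable (borel :: (real^'m) measure)"
  for L :: "real^'m^'r"
  unfolding matrix_vector_mult_def by (intro measurable_vec_lambda) measurable

lemma subspace_lebesgue_eq: "subspace_lebesgue (kerR L) = distr (PP L) borel (TT L)"
  unfolding subspace_lebesgue_def PP_def TT_def Kb_def dd_def ..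

lemma HH_zero:
  fixes L :: "real^'m^'r"
  assumes L_rank: "rank L = CARD('r)" and Asub: "A \<subseteq> unit_cube"
    and k: "k \<notin> (\<lambda>x. L *v x) ` unit_cube"
  shows "HH L A k = 0"
proof -
  have "indicator A (sec L k + TT L t) = (0::ennreal)" for t
  proof -
    have "sec L k + TT L t \<notin> A"
    proof
      assume "sec L k + TT L t \<in> A"
      then have "sec L k + TT L t \<in> unit_cube" using Asub by blast
      then have "k \<in> (\<lambda>x. L *v x) ` unit_cube" using L_sec_TT[OF L_rank, of k t] by (metis image_eqI)
      then show False using k by blast
    qed
    then show ?thesis by simp
  qed
  then show ?thesis unfolding HH_def by simp
qed

lemma NN_finite_sum:
  fixes L :: "real^'m^'r"
  assumes L_rank: "rank L = CARD('r)" and Asub: "A \<subseteq> unit_cube"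
    and fin: "finite ((\<lambda>x. L *v x) ` unit_cube \<inter> int_vecs)"
  shows "NN L A = (\<Sum>k\<in>(\<lambda>x. L *v x) ` unit_cube \<inter> int_vecs. HH L A k)"
  unfolding NN_def
  by (rule nn_integral_count_space'[OF fin]) (auto intro: HH_zero[OF L_rank Asub])

lemma term_eq:
  fixes L :: "real^'m^'r"
  assumes L_rank: "rank L = CARD('r)" and A[measurable]: "A \<in> sets borel"
  shows "emeasure (subspace_lebesgue (kerR L)) ((\<lambda>y. y - z) ` (A \<inter> (\<lambda>v. z + v) ` kerR L))
     = HH L A (L *v z)"
proof -
  define E where "E = (\<lambda>y. y - z) ` (A \<inter> (\<lambda>v. z + v) ` kerR L)"
  have Eeq: "E = (\<lambda>v. L *v v) -` {0} \<inter> (\<lambda>v. z + v) -` A"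
  proof
    show "E \<subseteq> (\<lambda>v. L *v v) -` {0} \<inter> (\<lambda>v. z + v) -` A"
    proof
      fix v assume "v \<in> E"
      then obtain w where "w \<in> kerR L" "z + w \<in> A" "v = z + w - z" unfolding E_def by blast
      then show "v \<in> (\<lambda>v. L *v v) -` {0} \<inter> (\<lambda>v. z + v) -` A" by (simp add: kerR_def)
    qed
    show "(\<lambda>v. L *v v) -` {0} \<inter> (\<lambda>v. z + v) -` A \<subseteq> E"
    proof
      fix v assume v: "v \<in> (\<lambda>v. L *v v) -` {0} \<inter> (\<lambda>v. z + v) -` A"
      then have "z + v \<in> A \<inter> (\<lambda>v. z + v) ` kerR L" by (auto simp: kerR_def)
      moreover have "v = (z + v) - z" by simp
      ultimately show "v \<in> E" unfolding E_def by (rule rev_image_eqI)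
    qed
  qed
  have Em: "E \<in> sets borel"
  proof -
    have "(\<lambda>v. L *v v) -` {0} \<in> sets borel" by (rule measurable_sets_borel[OF Lmult_measurable]) simp
    moreover have "(\<lambda>v. z + v) -` A \<in> sets borel" by (rule measurable_sets_borel[OF _ A]) simp
    ultimately show ?thesis unfolding Eeq by blast
  qed
  have "emeasure (subspace_lebesgue (kerR L)) E = (\<integral>\<^sup>+y. indicator E y \<partial>distr (PP L) borel (TT L))"
    unfolding subspace_lebesgue_eq using Em by (simp add: nn_integral_indicator)
  also have "\<dots> = (\<integral>\<^sup>+t. indicator E (TT L t) \<partial>PP L)"
    using Em by (intro nn_integral_distr) simp_all
  also have "\<dots> = (\<integral>\<^sup>+t. indicator A (TT L t + z) \<partial>PP L)"
    by (intro nn_integral_cong) (simp add: Eeq L_TT indicator_def add.commute)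
  also have "\<dots> = (\<integral>\<^sup>+t. indicator A (sec L (L *v z) + (TT L t + (z - sec L (L *v z)))) \<partial>PP L)"
    by simp
  also have "\<dots> = (\<integral>\<^sup>+t. indicator A (sec L (L *v z) + TT L t) \<partial>PP L)"
  proof (rule PP_invariant[where f="\<lambda>w. indicator A (sec L (L *v z) + w)"])
    show "(\<lambda>w. indicator A (sec L (L *v z) + w) :: ennreal) \<in> borel_measurable borel" by measurable
    show "z - sec L (L *v z) \<in> kerR L"
      by (simp add: kerR_def matrix_vector_mult_diff_distrib sec_prop[OF L_rank])
  qed
  finally show ?thesis unfolding E_def HH_def .
qed

lemma HH_cube_finite:
  fixes L :: "real^'m^'r"
  shows "HH L unit_cube k < \<infinity>"
proof -
  define R where "R = norm (sec L k) + real CARD('m)"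
  define B where "B = Pi\<^sub>E {..<dd L} (\<lambda>_. {-R..R})"
  have Bs: "B \<in> sets (PP L)" unfolding B_def PP_def by (intro sets_PiM_I_finite) auto
  have le: "indicator unit_cube (sec L k + TT L t) \<le> (indicator B t :: ennreal)" if t: "t \<in> space (PP L)" for t
  proof (cases "sec L k + TT L t \<in> unit_cube")
    case True
    let ?y = "sec L k + TT L t"
    have "norm ?y \<le> (\<Sum>i\<in>UNIV. \<bar>?y$i\<bar>)" by (rule norm_le_l1_cart)
    also have "\<dots> \<le> (\<Sum>i\<in>(UNIV::'m set). 1)"
    proof (intro sum_mono)
      fix i
      have "0 \<le> ?y$i" "?y$i < 1" using True unfolding unit_cube_def by blast+
      then show "\<bar>?y$i\<bar> \<le> 1" by simp
    qed
    finally have ny: "norm ?y \<le> real CARD('m)" by simp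
    have nT: "norm (TT L t) \<le> R"
    proof -
      have "norm (TT L t) = norm (?y - sec L k)" by simp
      also have "\<dots> \<le> norm ?y + norm (sec L k)" by (rule norm_triangle_ineq4)
      finally show ?thesis using ny unfolding R_def by simp
    qed
    have "t j \<in> {-R..R}" if j: "j < dd L" for j
    proof -
      have "\<bar>t j\<bar> = \<bar>TT L t \<bullet> Kb L ! j\<bar>" using TT_inner[OF j] by simp
      also have "\<dots> \<le> norm (TT L t) * norm (Kb L ! j)" by (rule Cauchy_Schwarz_ineq2)
      also have "norm (Kb L ! j) = 1" using Kb_props(4)[OF j j] by (simp add: norm_eq_1)
      finally show ?thesis using nT by auto
    qed
    moreover have "t \<in> extensional {..<dd L}" using t unfolding PP_def by (simp add: space_PiM PiE_iff)
    ultimately have "t \<in> B" unfolding B_def by (auto simp: PiE_iff)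
    then show ?thesis using True by simp
  qed simp
  have "HH L unit_cube k \<le> (\<integral>\<^sup>+t. indicator B t \<partial>PP L)"
    unfolding HH_def by (intro nn_integral_mono le)
  also have "\<dots> = emeasure (PP L) B" using Bs by simp
  also have "\<dots> = (\<Prod>i\<in>{..<dd L}. emeasure lborel {-R..R})"
    unfolding B_def PP_def by (subst lb.emeasure_PiM) auto
  also have "\<dots> < \<infinity>" by (simp add: emeasure_lborel_Icc_eq power_less_top_ennreal)
  finally show ?thesis .
qed



lemma PP_space_pos: "emeasure (PP L) (space (PP L)) \<noteq> 0"
proof -
  have sp: "space (PP L) = Pi\<^sub>E {..<dd L} (\<lambda>_. UNIV)" unfolding PP_def by (simp add: space_PiM)
  have "emeasure (PP L) (Pi\<^sub>E {..<dd L} (\<lambda>_. UNIV)) = (\<Prod>i\<in>{..<dd L}. emeasure lborel (UNIV :: real set))"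
    unfolding PP_def by (subst lb.emeasure_PiM) auto
  also have "\<dots> = \<infinity> ^ dd L" by simp
  also have "\<dots> \<noteq> 0" by (simp add: top_power_ennreal)
  finally show ?thesis unfolding sp .
qed

lemma NN_cube_pos:
  fixes L :: "real^'m^'r"
  assumes L_int: "\<forall>i j. L$i$j \<in> \<int>" and L_rank: "rank L = CARD('r)"
  shows "NN L unit_cube \<noteq> 0"
proof -
  let ?Zm = "int_vecs :: (real^'m) set"
  have "emeasure (PP L) (space (PP L)) = (\<integral>\<^sup>+t. 1 \<partial>PP L)" by simp
  also have "\<dots> = (\<integral>\<^sup>+t. \<integral>\<^sup>+n. indicator unit_cube (TT L t + n) \<partial>count_space ?Zm \<partial>PP L)"
    by (simp only: count_cube_sum)
  also have "\<dots> = (\<integral>\<^sup>+n. \<integral>\<^sup>+t. indicator unit_cube (TT L t + n) \<partial>PP L \<partial>count_space ?Zm)"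
    by (intro nn_integral_count_space_nn_integral countable_int_vecs) measurable
  finally have eq: "emeasure (PP L) (space (PP L)) = \<dots>" .
  have "\<exists>n\<in>?Zm. (\<integral>\<^sup>+t. indicator unit_cube (TT L t + n) \<partial>PP L) \<noteq> 0"
  proof (rule ccontr)
    assume "\<not> ?thesis"
    then have "(\<integral>\<^sup>+n. \<integral>\<^sup>+t. indicator unit_cube (TT L t + n) \<partial>PP L \<partial>count_space ?Zm) = (\<integral>\<^sup>+n. 0 \<partial>count_space ?Zm)"
      by (intro nn_integral_cong) auto
    then show False using eq PP_space_pos[of L] by simp
  qed
  then obtain n where n: "n \<in> ?Zm" and nz: "(\<integral>\<^sup>+t. indicator unit_cube (TT L t + n) \<partial>PP L) \<noteq> 0" by blast
  define k where "k = L *v n"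
  have k: "k \<in> int_vecs" unfolding k_def by (rule int_vecs_mult[OF L_int n])
  have u: "n - sec L k \<in> kerR L"
    by (simp add: kerR_def matrix_vector_mult_diff_distrib sec_prop[OF L_rank] k_def)
  have "(\<integral>\<^sup>+t. indicator unit_cube (sec L k + (TT L t + (n - sec L k))) \<partial>PP L) = HH L unit_cube k"
    unfolding HH_def
    by (rule PP_invariant[where f="\<lambda>w. indicator unit_cube (sec L k + w)", OF _ u]) measurable
  moreover have "sec L k + (TT L t + (n - sec L k)) = TT L t + n" for t by simp
  ultimately have "HH L unit_cube k \<noteq> 0" using nz by simp
  moreover have "HH L unit_cube k \<le> NN L unit_cube" unfolding NN_def by (rule nn_integral_ge_point[OF k])
  ultimately show ?thesis by (metis le_zero_eq)
qed



theorem lemma3p3: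
  fixes L :: "real^'m^'r" and \<mu>T :: "(real^'m) measure"
  assumes L_int: "\<forall>i j. L$i$j \<in> \<int>"
    and L_rank: "rank L = CARD('r)"
    and haar: "haar_kerT L \<mu>T"
  shows "\<exists>c::real. c > 0 \<and>
    (\<forall>(M::nat) (xs :: nat \<Rightarrow> real^'m).
       (\<forall>i\<in>{1..M}. xs i \<in> unit_cube) \<and>
       bij_betw (\<lambda>i. L *v xs i) {1..M} ((\<lambda>x. L *v x) ` unit_cube \<inter> int_vecs) \<longrightarrow>
       (\<forall>A. A \<in> sets borel \<and> A \<subseteq> kerT L \<longrightarrow>
          emeasure \<mu>T A =
            ennreal c * (\<Sum>i\<in>{1..M}.
               emeasure (subspace_lebesgue (kerR L))
                 ((\<lambda>y. y - xs i) ` (A \<inter> (\<lambda>v. xs i + v) ` kerR L)))))"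
proof -
  define Z0 where "Z0 = NN L unit_cube"
  have Z0nz: "Z0 \<noteq> 0" unfolding Z0_def by (rule NN_cube_pos[OF L_int L_rank])
  define c where "c = (if Z0 = \<infinity> then 1 else 1 / enn2real Z0)"
  have cpos: "c > 0"
  proof (cases "Z0 = \<infinity>")
    case False
    then have "0 < enn2real Z0" using Z0nz by (simp add: enn2real_positive_iff top.not_eq_extremum zero_less_iff_neq_zero)
    then show ?thesis using False unfolding c_def by simp
  qed (simp add: c_def)
  show ?thesis
  proof (intro exI[of _ c] conjI cpos allI impI)
    fix M :: nat and xs :: "nat \<Rightarrow> real^'m" and A :: "(real^'m) set"
    assume h: "(\<forall>i\<in>{1..M}. xs i \<in> unit_cube) \<and>
       bij_betw (\<lambda>i. L *v xs i) {1..M} ((\<lambda>x. L *v x) ` unit_cube \<inter> int_vecs)"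
      and hA: "A \<in> sets borel \<and> A \<subseteq> kerT L"
    let ?I = "(\<lambda>x. L *v x) ` unit_cube \<inter> int_vecs"
    have bij: "bij_betw (\<lambda>i. L *v xs i) {1..M} ?I" using h by blast
    have A: "A \<in> sets borel" and AK: "A \<subseteq> kerT L" using hA by blast+
    have Acube: "A \<subseteq> unit_cube" using AK by (auto simp: kerT_def)
    have fin: "finite ?I" using bij_betw_finite[OF bij] by simp
    have "Z0 = (\<Sum>k\<in>?I. HH L unit_cube k)" unfolding Z0_def by (rule NN_finite_sum[OF L_rank order.refl fin])
    also have "\<dots> < \<infinity>" using fin by (simp add: HH_cube_finite[simplified])
    finally have Z0fin: "Z0 < \<infinity>" .
    define z where "z = enn2real Z0"
    have Z0z: "Z0 = ennreal z" unfolding z_def using Z0fin by simp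
    have zpos: "z > 0" unfolding z_def using Z0fin Z0nz by (simp add: enn2real_positive_iff zero_less_iff_neq_zero)
    have cz: "c = 1 / z" unfolding c_def z_def using Z0fin by simp
    have "(\<Sum>i\<in>{1..M}. emeasure (subspace_lebesgue (kerR L)) ((\<lambda>y. y - xs i) ` (A \<inter> (\<lambda>v. xs i + v) ` kerR L)))
        = (\<Sum>i\<in>{1..M}. HH L A (L *v xs i))"
      by (intro sum.cong refl term_eq[OF L_rank A])
    also have "\<dots> = (\<Sum>k\<in>?I. HH L A k)" by (rule sum.reindex_bij_betw[OF bij])
    also have "\<dots> = NN L A" by (rule NN_finite_sum[OF L_rank Acube fin, symmetric])
    also have "\<dots> = emeasure \<mu>T A * Z0" unfolding Z0_def by (rule N_mu[OF L_int L_rank haar A AK])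
    finally have eq: "(\<Sum>i\<in>{1..M}. emeasure (subspace_lebesgue (kerR L)) ((\<lambda>y. y - xs i) ` (A \<inter> (\<lambda>v. xs i + v) ` kerR L)))
        = emeasure \<mu>T A * ennreal z" unfolding Z0z .
    have "ennreal c * (emeasure \<mu>T A * ennreal z) = emeasure \<mu>T A * (ennreal (1/z) * ennreal z)"
      unfolding cz by (simp add: ac_simps)
    also have "ennreal (1/z) * ennreal z = ennreal (1/z * z)" using zpos by (intro ennreal_mult[symmetric]) auto
    also have "1/z * z = 1" using zpos by simp
    finally show "emeasure \<mu>T A = ennreal c * (\<Sum>i\<in>{1..M}. emeasure (subspace_lebesgue (kerR L)) ((\<lambda>y. y - xs i) ` (A \<inter> (\<lambda>v. xs i + v) ` kerR L)))"
      unfolding eq by simp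
  qed
qed


end
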